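(* Let $X$ be a graph with real symmetric Hamiltonian $M$, let $a\neq b$ be vertices, and let $s\in\mathbb{R}\setminus\{-1,0,1\}$. Then perfect state transfer occurs from $\mathbf e_a+s\mathbf e_b$ to $\mathbf e_b+s\mathbf e_a$ at time $\tau$ if and only if perfect state transfer occurs from $\mathbf e_a$ to $\mathbf e_b$ at time $\tau$.
   Context: $U(t)=e^{-\mathrm{i}tM}$. Perfect state transfer from $\mathbf u$ to $\boldsymbol\mu$ (vectors of equal norm) at time $\tau>0$ means $U(\tau)\mathbf u=\eta\boldsymbol\mu$ for some complex $\eta$ with $|\eta|=1$. *)

theory Defs
  imports "HOL-Analysis.Analysis"
begin

definition cmat_pow :: "complex^'n^'n \<Rightarrow> nat \<Rightarrow> complex^'n^'n" where
  "cmat_pow A k = (((**) A) ^^ k) (mat 1)"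

definition cmat_exp :: "complex^'n^'n \<Rightarrow> complex^'n^'n" where
  "cmat_exp A = (\<Sum>k. (1 / fact k) *\<^sub>R cmat_pow A k)"

definition transition :: "real^'n^'n \<Rightarrow> real \<Rightarrow> complex^'n^'n" where
  "transition M t = cmat_exp (\<chi> i j. - \<i> * complex_of_real t * complex_of_real (M $ i $ j))"

definition evec :: "'n::finite \<Rightarrow> complex^'n" where
  "evec a = axis a 1"

definition pst :: "real^'n^'n \<Rightarrow> complex^'n \<Rightarrow> complex^'n \<Rightarrow> real \<Rightarrow> bool" where
  "pst M u \<mu> \<tau> \<longleftrightarrow> \<tau> > 0 \<and> norm u = norm \<mu> \<and>
     (\<exists>\<eta>::complex. cmod \<eta> = 1 \<and> transition M \<tau> *v u = \<eta> *s \<mu>)"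

end

theory Submission
  imports Defs
begin


definition rs :: "complex^'n::finite^'n \<Rightarrow> 'n \<Rightarrow> real" where
  "rs A i = (\<Sum>j\<in>UNIV. cmod (A$i$j))"
definition nrm :: "complex^'n::finite^'n \<Rightarrow> real" where
  "nrm A = Max (range (rs A))"

lemma rs_nonneg: "0 \<le> rs A i" unfolding rs_def by (simp add: sum_nonneg)
lemma rs_le_nrm: "rs A i \<le> nrm A" unfolding nrm_def by (rule Max_ge) auto
lemma nrm_le: "(\<And>i. rs A i \<le> c) \<Longrightarrow> nrm A \<le> c" unfolding nrm_def
  by (subst Max_le_iff) auto
lemma nrm_nonneg: "0 \<le> nrm A" using rs_nonneg rs_le_nrm order_trans by blast
lemma entry_le_nrm: "cmod (A$i$j) \<le> nrm A"
proof -
  have "cmod (A$i$j) \<le> rs A i" unfolding rs_def by (rule member_le_sum) auto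
  thus ?thesis using rs_le_nrm order_trans by blast
qed
lemma nrm_eq_0: "nrm A = 0 \<longleftrightarrow> A = 0"
proof
  assume "nrm A = 0"
  hence "\<And>i j. A$i$j = 0" using entry_le_nrm by (metis norm_le_zero_iff)
  thus "A = 0" by (simp add: vec_eq_iff)
next
  assume "A = 0" thus "nrm A = 0"
    using nrm_le[of A 0] nrm_nonneg[of A] by (simp add: rs_def)
qed
lemma nrm_triangle: "nrm (A + B) \<le> nrm A + nrm B"
proof (rule nrm_le)
  fix i
  have "rs (A+B) i \<le> rs A i + rs B i" unfolding rs_def
    by (simp add: sum.distrib[symmetric] sum_mono norm_triangle_ineq)
  thus "rs (A+B) i \<le> nrm A + nrm B" using rs_le_nrm[of A i] rs_le_nrm[of B i] by linarith
qed
lemma nrm_scale_le: "nrm (r *\<^sub>R A) \<le> \<bar>r\<bar> * nrm A"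
proof (rule nrm_le)
  fix i
  have "rs (r *\<^sub>R A) i = \<bar>r\<bar> * rs A i" unfolding rs_def by (simp add: sum_distrib_left)
  thus "rs (r *\<^sub>R A) i \<le> \<bar>r\<bar> * nrm A" by (simp add: mult_left_mono rs_le_nrm)
qed
lemma nrm_scale: "nrm (r *\<^sub>R A) = \<bar>r\<bar> * nrm A"
proof (cases "r = 0")
  case True thus ?thesis using nrm_eq_0[of 0] by simp
next
  case False
  have "nrm A = nrm ((1/r) *\<^sub>R (r *\<^sub>R A))" using False by simp
  also have "\<dots> \<le> \<bar>1/r\<bar> * nrm (r *\<^sub>R A)" by (rule nrm_scale_le)
  finally have "\<bar>r\<bar> * nrm A \<le> nrm (r *\<^sub>R A)" using False
    by (simp add: field_simps)
  thus ?thesis using nrm_scale_le[of r A] by linarith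
qed
lemma nrm_mult: "nrm (A ** B) \<le> nrm A * nrm B"
proof (rule nrm_le)
  fix i
  have "rs (A ** B) i \<le> (\<Sum>j\<in>UNIV. \<Sum>l\<in>UNIV. cmod (A$i$l) * cmod (B$l$j))"
    unfolding rs_def matrix_matrix_mult_def
    by (auto intro!: sum_mono order_trans[OF norm_sum] simp: norm_mult)
  also have "\<dots> = (\<Sum>l\<in>UNIV. cmod (A$i$l) * rs B l)"
    unfolding rs_def by (subst sum.swap) (simp add: sum_distrib_left)
  also have "\<dots> \<le> (\<Sum>l\<in>UNIV. cmod (A$i$l) * nrm B)"
    by (intro sum_mono mult_left_mono rs_le_nrm) auto
  also have "\<dots> = rs A i * nrm B" unfolding rs_def by (simp add: sum_distrib_right)
  also have "\<dots> \<le> nrm A * nrm B" by (intro mult_right_mono rs_le_nrm nrm_nonneg)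
  finally show "rs (A ** B) i \<le> nrm A * nrm B" .
qed
lemma nrm_one: "nrm (mat 1 :: complex^'n::finite^'n) = 1"
proof -
  have r: "rs (mat 1 :: complex^'n^'n) i = 1" for i
    unfolding rs_def mat_def by (simp add: if_distrib cong: if_cong)
  have "nrm (mat 1 :: complex^'n^'n) \<le> 1" by (rule nrm_le) (simp add: r)
  moreover have "1 \<le> nrm (mat 1 :: complex^'n^'n)" using rs_le_nrm r by metis
  ultimately show ?thesis by simp
qed
lemma norm_le_nrm: "norm A \<le> real CARD('n) * nrm (A :: complex^'n::finite^'n)"
proof -
  have "norm A \<le> (\<Sum>i\<in>UNIV. norm (A$i))"
    unfolding norm_vec_def by (rule L2_set_le_sum) auto
  also have "\<dots> \<le> (\<Sum>i\<in>UNIV. rs A i)"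
    unfolding rs_def by (intro sum_mono) (simp add: norm_vec_def L2_set_le_sum)
  also have "\<dots> \<le> (\<Sum>i\<in>(UNIV::'n set). nrm A)" by (intro sum_mono rs_le_nrm)
  finally show ?thesis by simp
qed
lemma nrm_le_norm: "nrm (A :: complex^'n::finite^'n) \<le> real CARD('n) * norm A"
proof (rule nrm_le)
  fix i
  have e: "cmod (A$i$j) \<le> norm A" for j
  proof -
    have "cmod (A$i$j) \<le> norm (A$i)" by (rule Finite_Cartesian_Product.norm_nth_le)
    also have "\<dots> \<le> norm A" by (rule Finite_Cartesian_Product.norm_nth_le)
    finally show ?thesis .
  qed
  have "rs A i \<le> (\<Sum>j\<in>(UNIV::'n set). norm A)" unfolding rs_def
    by (rule sum_mono) (rule e)
  thus "rs A i \<le> real CARD('n) * norm A" by simp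
qed



typedef (overloaded) ('n::finite) cm = "UNIV :: (complex^'n^'n) set" by simp
setup_lifting type_definition_cm

instantiation cm :: (finite) real_normed_algebra_1
begin
lift_definition zero_cm :: "'a cm" is 0 .
lift_definition one_cm :: "'a cm" is "mat 1" .
lift_definition plus_cm :: "'a cm \<Rightarrow> 'a cm \<Rightarrow> 'a cm" is "(+)" .
lift_definition minus_cm :: "'a cm \<Rightarrow> 'a cm \<Rightarrow> 'a cm" is "(-)" .
lift_definition uminus_cm :: "'a cm \<Rightarrow> 'a cm" is "uminus" .
lift_definition times_cm :: "'a cm \<Rightarrow> 'a cm \<Rightarrow> 'a cm" is "(**)" .
lift_definition scaleR_cm :: "real \<Rightarrow> 'a cm \<Rightarrow> 'a cm" is "scaleR" .
lift_definition norm_cm :: "'a cm \<Rightarrow> real" is nrm .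
definition sgn_cm :: "'a cm \<Rightarrow> 'a cm" where "sgn_cm x = scaleR (inverse (norm x)) x"
definition dist_cm :: "'a cm \<Rightarrow> 'a cm \<Rightarrow> real" where "dist_cm x y = norm (x - y)"
definition uniformity_cm_def:
  "(uniformity :: ('a cm \<times> 'a cm) filter) = (INF e\<in>{0 <..}. principal {(x, y). dist x y < e})"
definition open_cm :: "'a cm set \<Rightarrow> bool" where
  "open_cm U = (\<forall>x\<in>U. eventually (\<lambda>(x', y). x' = x \<longrightarrow> y \<in> U) uniformity)"
instance
proof
  fix a b c :: "'a cm" and r s :: real
  show "a + b + c = a + (b + c)" by transfer (simp add: add.assoc)
  show "a + b = b + a" by transfer (simp add: add.commute)
  show "0 + a = a" by transfer simp
  show "- a + a = 0" by transfer simp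
  show "a - b = a + - b" by transfer simp
  show "r *\<^sub>R (a + b) = r *\<^sub>R a + r *\<^sub>R b" by transfer (simp add: scaleR_add_right)
  show "(r + s) *\<^sub>R a = r *\<^sub>R a + s *\<^sub>R a" by transfer (simp add: scaleR_add_left)
  show "r *\<^sub>R s *\<^sub>R a = (r * s) *\<^sub>R a" by transfer simp
  show "1 *\<^sub>R a = a" by transfer simp
  show "a * b * c = a * (b * c)" by transfer (simp add: matrix_mul_assoc)
  show "(a + b) * c = a * c + b * c" by transfer
      (simp add: matrix_matrix_mult_def vec_eq_iff sum.distrib distrib_right)
  show "a * (b + c) = a * b + a * c" by transfer (simp add: matrix_add_ldistrib)
  show "1 * a = a" by transfer simp
  show "a * 1 = a" by transfer simp
  show "(0::'a cm) \<noteq> 1" by transfer (simp add: vec_eq_iff mat_def)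
  show "r *\<^sub>R a * b = r *\<^sub>R (a * b)" by transfer (simp add: scalar_matrix_assoc)
  show "a * r *\<^sub>R b = r *\<^sub>R (a * b)" by transfer (simp add: matrix_scalar_ac scalar_matrix_assoc)
  show "sgn a = scaleR (inverse (norm a)) a" by (simp add: sgn_cm_def)
  show "dist a b = norm (a - b)" by (simp add: dist_cm_def)
  show "(uniformity :: ('a cm \<times> 'a cm) filter) = (INF e\<in>{0 <..}. principal {(x, y). dist x y < e})"
    by (simp add: uniformity_cm_def)
  show "norm a = 0 \<longleftrightarrow> a = 0" by transfer (simp add: nrm_eq_0)
  show "norm (a + b) \<le> norm a + norm b" by transfer (rule nrm_triangle)
  show "norm (r *\<^sub>R a) = \<bar>r\<bar> * norm a" by transfer (rule nrm_scale)
  show "norm (a * b) \<le> norm a * norm b" by transfer (rule nrm_mult)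
  show "norm (1::'a cm) = 1" by transfer (rule nrm_one)
next
  fix U :: "'a cm set"
  show "open U = (\<forall>x\<in>U. \<forall>\<^sub>F (x', y) in uniformity. x' = x \<longrightarrow> y \<in> U)"
    by (simp add: open_cm_def)
qed
end

lemma norm_Rep_le: "norm (Rep_cm x) \<le> real CARD('n) * norm (x :: 'n::finite cm)"
  by (simp add: norm_cm.rep_eq norm_le_nrm)
lemma norm_cm_le: "norm (x :: 'n::finite cm) \<le> real CARD('n) * norm (Rep_cm x)"
  by (simp add: norm_cm.rep_eq nrm_le_norm)

instance cm :: (finite) banach
proof
  fix X :: "nat \<Rightarrow> 'a cm"
  assume C: "Cauchy X"
  define K where "K = real CARD('a)"
  have K: "K > 0" unfolding K_def by simp
  have "Cauchy (\<lambda>n. Rep_cm (X n))"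
  proof (rule metric_CauchyI)
    fix e :: real assume e: "e > 0"
    obtain M where M: "\<forall>m\<ge>M. \<forall>n\<ge>M. dist (X m) (X n) < e / K"
      using metric_CauchyD[OF C, of "e/K"] e K by auto
    show "\<exists>M. \<forall>m\<ge>M. \<forall>n\<ge>M. dist (Rep_cm (X m)) (Rep_cm (X n)) < e"
    proof (intro exI allI impI)
      fix m n assume "m \<ge> M" "n \<ge> M"
      hence "dist (X m) (X n) < e / K" using M by auto
      hence "K * norm (X m - X n) < e" using K by (simp add: dist_norm field_simps)
      moreover have "norm (Rep_cm (X m - X n)) \<le> K * norm (X m - X n)"
        unfolding K_def by (rule norm_Rep_le)
      ultimately show "dist (Rep_cm (X m)) (Rep_cm (X n)) < e"
        by (simp add: dist_norm minus_cm.rep_eq)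
    qed
  qed
  then obtain L where L: "(\<lambda>n. Rep_cm (X n)) \<longlonglongrightarrow> L"
    using Cauchy_convergent convergent_def by blast
  have "X \<longlonglongrightarrow> Abs_cm L"
  proof (rule LIMSEQ_I)
    fix e :: real assume e: "e > 0"
    obtain N where N: "\<forall>n\<ge>N. norm (Rep_cm (X n) - L) < e / K"
      using LIMSEQ_D[OF L, of "e/K"] e K by auto
    show "\<exists>N. \<forall>n\<ge>N. norm (X n - Abs_cm L) < e"
    proof (intro exI allI impI)
      fix n assume "n \<ge> N"
      hence "K * norm (Rep_cm (X n) - L) < e" using N K by (simp add: field_simps)
      moreover have "norm (X n - Abs_cm L) \<le> K * norm (Rep_cm (X n - Abs_cm L))"
        unfolding K_def by (rule norm_cm_le)
      ultimately show "norm (X n - Abs_cm L) < e"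
        by (simp add: minus_cm.rep_eq Abs_cm_inverse)
    qed
  qed
  thus "convergent X" unfolding convergent_def by blast
qed



lemma bl_Rep: "bounded_linear (Rep_cm :: 'n::finite cm \<Rightarrow> _)"
proof (rule bounded_linear_intro[where K="real CARD('n)"])
  fix x y :: "'n cm" and r :: real
  show "Rep_cm (x + y) = Rep_cm x + Rep_cm y" by (simp add: plus_cm.rep_eq)
  show "Rep_cm (r *\<^sub>R x) = r *\<^sub>R Rep_cm x" by (simp add: scaleR_cm.rep_eq)
  show "norm (Rep_cm x) \<le> norm x * real CARD('n)" using norm_Rep_le[of x] by (simp add: mult.commute)
qed

lemma Rep_power: "Rep_cm (x ^ k) = cmat_pow (Rep_cm x) k"
  by (induction k) (simp_all add: cmat_pow_def times_cm.rep_eq one_cm.rep_eq)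

lemma cmat_pow_Suc: "cmat_pow A (Suc k) = A ** cmat_pow A k"
  by (simp add: cmat_pow_def)

lemma exp_series: "(\<lambda>k. (1 / fact k) *\<^sub>R cmat_pow (A::complex^'n::finite^'n) k)
     = (\<lambda>k. Rep_cm ((Abs_cm A) ^ k /\<^sub>R fact k))"
  by (simp add: scaleR_cm.rep_eq Rep_power Abs_cm_inverse divide_inverse_commute)

lemma summable_cmat: "summable (\<lambda>k. (1 / fact k) *\<^sub>R cmat_pow (A::complex^'n::finite^'n) k)"
  unfolding exp_series by (rule bounded_linear.summable[OF bl_Rep summable_exp_generic])

lemma cmat_exp_Rep: "cmat_exp A = Rep_cm (exp (Abs_cm A))"
  unfolding cmat_exp_def exp_series exp_def
  by (rule bounded_linear.suminf[OF bl_Rep summable_exp_generic, symmetric])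

lemma exp_transfer:
  assumes f: "bounded_linear f" and h: "\<And>k. f (cmat_pow A k) = cmat_pow B k"
  shows "f (cmat_exp A) = cmat_exp B"
proof -
  have "f (cmat_exp A) = (\<Sum>k. f ((1 / fact k) *\<^sub>R cmat_pow A k))"
    unfolding cmat_exp_def by (rule bounded_linear.suminf[OF f summable_cmat])
  also have "\<dots> = cmat_exp B" unfolding cmat_exp_def
    by (simp add: linear_simps(5)[OF f] h)
  finally show ?thesis .
qed

definition C :: "complex^'n::finite^'n \<Rightarrow> complex^'n^'n" where
  "C X = (\<chi> i j. cnj (X$i$j))"

lemma bl_C: "bounded_linear C"
  unfolding linear_conv_bounded_linear[symmetric]
  by (rule linearI) (simp_all add: C_def vec_eq_iff)

lemma C_mult: "C (A ** B) = C A ** C B"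
  by (simp add: C_def matrix_matrix_mult_def vec_eq_iff)

lemma C_one: "C (mat 1) = mat 1"
  by (simp add: C_def mat_def vec_eq_iff)

lemma C_pow: "C (cmat_pow A k) = cmat_pow (C A) k"
  by (induction k) (simp_all add: cmat_pow_Suc C_mult, simp add: cmat_pow_def C_one)

lemma C_C: "C (C A) = A" by (simp add: C_def vec_eq_iff)

lemma bl_T: "bounded_linear (transpose :: complex^'n::finite^'n \<Rightarrow> _)"
  unfolding linear_conv_bounded_linear[symmetric]
  by (rule linearI) (simp_all add: transpose_def vec_eq_iff)

lemma pow_comm: "cmat_pow A k ** A = A ** cmat_pow (A::complex^'n::finite^'n) k"
proof -
  have "Rep_cm ((Abs_cm A)^k * Abs_cm A) = Rep_cm (Abs_cm A * (Abs_cm A)^k)"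
    by (simp add: power_commutes)
  thus ?thesis by (simp add: times_cm.rep_eq Rep_power Abs_cm_inverse)
qed

lemma T_pow: "transpose A = A \<Longrightarrow> transpose (cmat_pow (A::complex^'n::finite^'n) k) = cmat_pow A k"
  by (induction k) (simp_all add: cmat_pow_Suc matrix_transpose_mul pow_comm, simp add: cmat_pow_def)



definition Hm :: "real^'n::finite^'n \<Rightarrow> real \<Rightarrow> complex^'n^'n" where
  "Hm M t = (\<chi> i j. - \<i> * complex_of_real t * complex_of_real (M $ i $ j))"

lemma transition_eq: "transition M t = cmat_exp (Hm M t)"
  by (simp add: transition_def Hm_def)

lemma C_Hm: "C (Hm M t) = - Hm M t"
  by (simp add: C_def Hm_def vec_eq_iff)

lemma C_transition: "C (transition M t) = cmat_exp (- Hm M t)"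
  unfolding transition_eq
  by (rule exp_transfer[OF bl_C]) (simp add: C_pow C_Hm)

lemma T_transition: "transpose M = M \<Longrightarrow> transpose (transition M t) = transition M t"
  unfolding transition_eq
proof (rule exp_transfer[OF bl_T])
  assume "transpose M = M"
  hence "transpose (Hm M t) = Hm M t"
  proof -
    have "M$j$i = M$i$j" for i j
      using arg_cong[OF \<open>transpose M = M\<close>, of "\<lambda>X. X$i$j"] by (simp add: transpose_def)
    thus ?thesis by (simp add: Hm_def transpose_def vec_eq_iff)
  qed
  thus "transpose (cmat_pow (Hm M t) k) = cmat_pow (Hm M t) k" for k by (rule T_pow)
qed

lemma CU: "C (transition M t) = Rep_cm (exp (Abs_cm (- Hm M t)))"
  by (simp add: C_transition cmat_exp_Rep)
lemma U: "transition M t = Rep_cm (exp (Abs_cm (Hm M t)))"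
  by (simp add: transition_eq cmat_exp_Rep)
lemma negAbs: "- Abs_cm (X::complex^'n::finite^'n) = Abs_cm (- X)"
  by (simp add: uminus_cm.abs_eq)

lemma unit1: "transition M t ** C (transition M t) = mat 1"
proof -
  have "Rep_cm (exp (Abs_cm (Hm M t)) * exp (- Abs_cm (Hm M t))) = Rep_cm 1"
    by (simp only: exp_minus_inverse)
  thus ?thesis by (simp only: CU, simp only: U) (simp add: negAbs times_cm.rep_eq one_cm.rep_eq)
qed

lemma unit2: "C (transition M t) ** transition M t = mat 1"
proof -
  have "Rep_cm (exp (Abs_cm (- Hm M t)) * exp (- Abs_cm (- Hm M t))) = Rep_cm 1"
    by (simp only: exp_minus_inverse)
  thus ?thesis by (simp only: CU, simp only: U) (simp add: negAbs times_cm.rep_eq one_cm.rep_eq)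
qed



definition vc :: "complex^'n::finite \<Rightarrow> complex^'n" where
  "vc v = (\<chi> i. cnj (v$i))"

lemma mv_smult: "(A::complex^'n::finite^'m::finite) *v (c *s x) = c *s (A *v x)"
  by (simp add: vec_eq_iff matrix_vector_mult_def sum_distrib_left mult_ac)

lemma vc_mv: "vc ((A::complex^'n::finite^'n) *v x) = C A *v vc x"
  by (simp add: vec_eq_iff matrix_vector_mult_def vc_def C_def)

lemma vc_smult: "vc (c *s x) = cnj c *s vc x"
  by (simp add: vec_eq_iff vc_def)

lemma swap_lemma:
  assumes y: "vc y = y" and z: "vc z = z" and eta: "cmod \<eta> = 1"
    and h: "transition M t *v y = \<eta> *s z"
  shows "transition M t *v z = \<eta> *s y"
proof -
  let ?U = "transition M t" let ?V = "C (transition M t)"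
  have "y = ?V *v (?U *v y)" by (simp add: matrix_vector_mul_assoc unit2)
  also have "\<dots> = \<eta> *s (?V *v z)" by (simp add: h mv_smult)
  finally have "cnj \<eta> *s y = (cnj \<eta> * \<eta>) *s (?V *v z)" by (simp add: vector_smult_assoc)
  also have "cnj \<eta> * \<eta> = 1" using eta
    by (metis complex_norm_square mult.commute of_real_1 power_one)
  finally have "cnj \<eta> *s y = ?V *v z" by simp
  hence "vc (cnj \<eta> *s y) = vc (?V *v z)" by simp
  thus ?thesis by (simp add: vc_smult vc_mv C_C y z)
qed

lemma norm_two:
  fixes x :: "complex^'n::finite"
  assumes "a \<noteq> b" and "\<And>i. i \<noteq> a \<Longrightarrow> i \<noteq> b \<Longrightarrow> x$i = 0"
  shows "norm x = sqrt ((cmod (x$a))^2 + (cmod (x$b))^2)"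
proof -
  have "(\<Sum>i\<in>UNIV. (cmod (x$i))^2) = (\<Sum>i\<in>{a,b}. (cmod (x$i))^2)"
    by (rule sum.mono_neutral_right) (auto simp: assms(2))
  thus ?thesis using assms(1) by (simp add: norm_vec_def L2_set_def)
qed

lemma evec_nth: "evec a $ i = (if i = a then 1 else 0)"
  by (simp add: evec_def axis_def)

lemma vc_comb: "vc (evec a + complex_of_real s *s evec b) = evec a + complex_of_real s *s evec b"
  by (simp add: vec_eq_iff vc_def evec_nth)

lemma vc_evec: "vc (evec a) = evec a"
  by (simp add: vec_eq_iff vc_def evec_nth)

theorem mainTheorem6:
  fixes M :: "real^'n^'n" and a b :: 'n and s \<tau> :: real
  assumes "transpose M = M"
    and "a \<noteq> b"
    and "s \<notin> {-1, 0, 1}"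
  shows "pst M (evec a + complex_of_real s *s evec b) (evec b + complex_of_real s *s evec a) \<tau>
     \<longleftrightarrow> pst M (evec a) (evec b) \<tau>"
proof -
  let ?U = "transition M \<tau>"
  let ?S = "complex_of_real s"
  let ?y = "evec a + ?S *s evec b" and ?z = "evec b + ?S *s evec a"
  define p where "p = ?U *v evec a"
  define q where "q = ?U *v evec b"
  have Uy: "?U *v ?y = p + ?S *s q" by (simp add: p_def q_def matrix_vector_right_distrib mv_smult)
  have Uz: "?U *v ?z = q + ?S *s p" by (simp add: p_def q_def matrix_vector_right_distrib mv_smult)
  have n1: "norm (evec a) = norm (evec b)"
    using norm_two[OF assms(2), of "evec a"] norm_two[OF assms(2), of "evec b"] assms(2)
    by (simp add: evec_nth)
  have n2: "norm ?y = norm ?z"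
    using norm_two[OF assms(2), of ?y] norm_two[OF assms(2), of ?z] assms(2)
    by (simp add: evec_nth)
  have S2: "?S^2 - 1 \<noteq> 0"
  proof
    assume "?S^2 - 1 = 0"
    hence "complex_of_real (s^2) = 1" by simp
    hence "s^2 = 1" using of_real_eq_1_iff by blast
    hence "s = 1 \<or> s = -1" by (simp add: power2_eq_1_iff)
    thus False using assms(3) by auto
  qed
  show ?thesis
  proof
    assume P: "pst M ?y ?z \<tau>"
    then obtain \<eta> where eta: "cmod \<eta> = 1" and h: "?U *v ?y = \<eta> *s ?z" and tau: "\<tau> > 0"
      unfolding pst_def by blast
    have h2: "?U *v ?z = \<eta> *s ?y"
      by (rule swap_lemma[OF vc_comb vc_comb eta h])
    have "p = \<eta> *s evec b"
    proof (subst vec_eq_iff, rule allI)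
      fix i
      have e1: "p$i + ?S * q$i = \<eta> * (evec b $ i + ?S * evec a $ i)"
      proof -
        have "(?U *v ?y)$i = p$i + ?S * q$i" unfolding Uy by simp
        moreover have "(?U *v ?y)$i = \<eta> * (evec b $ i + ?S * evec a $ i)" unfolding h by (simp add: algebra_simps)
        ultimately show ?thesis by simp
      qed
      have e2: "q$i + ?S * p$i = \<eta> * (evec a $ i + ?S * evec b $ i)"
      proof -
        have "(?U *v ?z)$i = q$i + ?S * p$i" unfolding Uz by simp
        moreover have "(?U *v ?z)$i = \<eta> * (evec a $ i + ?S * evec b $ i)" unfolding h2 by (simp add: algebra_simps)
        ultimately show ?thesis by simp
      qed
      have "(?S^2 - 1) * p$i = (?S^2 - 1) * (\<eta> * evec b $ i)"
        using e1 e2 by algebra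
      thus "p$i = (\<eta> *s evec b)$i" using S2 by simp
    qed
    thus "pst M (evec a) (evec b) \<tau>" unfolding pst_def using eta tau n1 p_def by auto
  next
    assume P: "pst M (evec a) (evec b) \<tau>"
    then obtain \<eta> where eta: "cmod \<eta> = 1" and h: "?U *v evec a = \<eta> *s evec b" and tau: "\<tau> > 0"
      unfolding pst_def by blast
    have h2: "?U *v evec b = \<eta> *s evec a"
      by (rule swap_lemma[OF vc_evec vc_evec eta h])
    have "?U *v ?y = \<eta> *s ?z"
      using Uy h h2 by (simp add: p_def q_def vec_eq_iff algebra_simps)
    thus "pst M ?y ?z \<tau>" unfolding pst_def using eta tau n2 by blast
  qed
qed

end
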